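(* Let $G$ be a graph on $n$ nodes with $m$ edges, and let $k\in\{1,\dots,n\}$ be the index satisfying $\lambda_k(G)>\frac{2m}{n}\ge\lambda_{k+1}(G)$. Then every threshold graph $T$ on $n$ nodes with $m$ edges satisfying $\sum_{i=1}^k d_i^*(T)\ge\sum_{i=1}^k\lambda_i(G)$ also satisfies $LE(T)\ge LE(G)$.
   Context: All graphs are finite and simple. For a graph $G$ on $n$ nodes with $m$ edges, the Laplacian eigenvalues (eigenvalues of $L(G)=D(G)-A(G)$) are $\lambda_1(G)\ge\dots\ge\lambda_n(G)=0$, and the Laplacian energy is $LE(G)=\sum_{i=1}^n\left|\lambda_i(G)-\frac{2m}{n}\right|$. For a graph with degrees $d_1\ge\dots\ge d_n$, the conjugate degrees are $d_i^*=|\{j: d_j\ge i\}|$. A threshold graph is a graph obtainable from the empty graph by repeatedly adding a new node that is either isolated or adjacent to all previously added nodes; for a threshold graph $T$ one has $\lambda_i(T)=d_i^*(T)$ for all $i$. *)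

theory Defs
  imports "Jordan_Normal_Form.Char_Poly" "HOL-Computational_Algebra.Polynomial"
begin

definition simple_graph :: "nat \<Rightarrow> (nat \<Rightarrow> nat \<Rightarrow> bool) \<Rightarrow> bool" where
  "simple_graph n E \<longleftrightarrow> (\<forall>i j. E i j \<longrightarrow> i < n \<and> j < n \<and> i \<noteq> j \<and> E j i)"

definition num_edges :: "nat \<Rightarrow> (nat \<Rightarrow> nat \<Rightarrow> bool) \<Rightarrow> nat" where
  "num_edges n E = card {(i, j). i < j \<and> j < n \<and> E i j}"

definition degree :: "nat \<Rightarrow> (nat \<Rightarrow> nat \<Rightarrow> bool) \<Rightarrow> nat \<Rightarrow> nat" where
  "degree n E v = card {u. u < n \<and> E v u}"

definition conj_degree :: "nat \<Rightarrow> (nat \<Rightarrow> nat \<Rightarrow> bool) \<Rightarrow> nat \<Rightarrow> nat" where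
  "conj_degree n E i = card {v. v < n \<and> degree n E v \<ge> i}"

definition laplacian :: "nat \<Rightarrow> (nat \<Rightarrow> nat \<Rightarrow> bool) \<Rightarrow> real mat" where
  "laplacian n E = mat n n (\<lambda>(i, j). if i = j then real (degree n E i)
                                      else if E i j then -1 else 0)"

text \<open>Laplacian eigenvalues with multiplicity, in non-increasing order:
  lap_eigs ! (i-1) is lambda_i.\<close>
definition lap_eigs :: "nat \<Rightarrow> (nat \<Rightarrow> nat \<Rightarrow> bool) \<Rightarrow> real list" where
  "lap_eigs n E = (THE xs. length xs = n \<and> sorted_wrt (\<ge>) xs \<and>
      char_poly (laplacian n E) = prod_list (map (\<lambda>a. [:- a, 1:]) xs))"

definition lap_energy :: "nat \<Rightarrow> (nat \<Rightarrow> nat \<Rightarrow> bool) \<Rightarrow> real" where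
  "lap_energy n E = (\<Sum>x\<leftarrow>lap_eigs n E. \<bar>x - 2 * real (num_edges n E) / real n\<bar>)"

text \<open>Threshold graph: there is an ordering sigma of the nodes (the order of
  insertion) and a choice dom j (node added at step j is dominating or isolated)
  such that two nodes inserted at steps i < j are adjacent iff dom j.\<close>
definition threshold_graph :: "nat \<Rightarrow> (nat \<Rightarrow> nat \<Rightarrow> bool) \<Rightarrow> bool" where
  "threshold_graph n E \<longleftrightarrow> simple_graph n E \<and>
     (\<exists>\<sigma> dom. bij_betw \<sigma> {0..<n} {0..<n} \<and>
        (\<forall>i<n. \<forall>j<n. i \<noteq> j \<longrightarrow> (E (\<sigma> i) (\<sigma> j) \<longleftrightarrow> dom (max i j))))"

end

theory Submission
  imports Defs "Jordan_Normal_Form.Schur_Decomposition" "HOL-Library.Multiset"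
begin


lemma lin_prod_mset:
  fixes xs ys :: "'a::field list"
  assumes "(\<Prod>a\<leftarrow>xs. [:- a, 1:]) = (\<Prod>a\<leftarrow>ys. [:- a, 1:])"
  shows "mset xs = mset ys"
  using assms
proof (induction xs arbitrary: ys)
  case Nil
  have "Polynomial.degree (\<Prod>a\<leftarrow>ys. [:- a, 1:]) = length ys"
    using degree_linear_factors[of uminus ys] by simp
  with Nil show ?case by simp
next
  case (Cons x xs)
  have "poly (\<Prod>a\<leftarrow>ys. [:- a, 1:]) x = 0"
    using Cons.prems[symmetric] by simp
  then have xin: "x \<in> set ys" by (auto simp: poly_prod_list_zero_iff)
  have "[:- x, 1:] * (\<Prod>a\<leftarrow>xs. [:- a, 1:]) = [:- x, 1:] * (\<Prod>a\<leftarrow>remove1 x ys. [:- a, 1:])"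
    using Cons.prems prod_list_map_remove1[OF xin, of "\<lambda>a. [:- a, 1:]"] by simp
  then have "(\<Prod>a\<leftarrow>xs. [:- a, 1:]) = (\<Prod>a\<leftarrow>remove1 x ys. [:- a, 1:])"
    by (subst (asm) mult_left_cancel) auto
  from Cons.IH[OF this] xin show ?case by simp
qed

lemma sorted_desc_unique:
  fixes xs ys :: "'a::linorder list"
  assumes "sorted_wrt (\<ge>) xs" "sorted_wrt (\<ge>) ys" "mset xs = mset ys"
  shows "xs = ys"
proof -
  have s1: "sorted (rev xs)" "sorted (rev ys)" using assms(1,2)
    by (auto simp: sorted_wrt_rev)
  have "sort (rev ys) = rev xs" by (rule properties_for_sort) (use assms s1 in auto)
  moreover have "sort (rev ys) = rev ys" using s1 by (simp add: sorted_sort_id)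
  ultimately show ?thesis by simp
qed

lemma real_sym_eig_real:
  fixes A :: "real mat"
  assumes A: "A \<in> carrier_mat n n" and sym: "\<And>i j. i < n \<Longrightarrow> j < n \<Longrightarrow> A $$ (i,j) = A $$ (j,i)"
    and root: "poly (char_poly (map_mat complex_of_real A)) e = 0"
  shows "Im e = 0"
proof -
  let ?B = "map_mat complex_of_real A"
  have B: "?B \<in> carrier_mat n n" using A by simp
  from root eigenvalue_root_char_poly[OF B] obtain v where ev: "eigenvector ?B v e"
    unfolding eigenvalue_def by blast
  hence v: "v \<in> carrier_vec n" "v \<noteq> 0\<^sub>v n" "?B *\<^sub>v v = e \<cdot>\<^sub>v v"
    unfolding eigenvector_def using B by auto
  define s where "s = (\<Sum>i<n. \<Sum>j<n. cnj (v $ i) * complex_of_real (A $$ (i,j)) * v $ j)"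
  have Bv: "(\<Sum>j<n. complex_of_real (A $$ (i,j)) * v $ j) = e * v $ i" if "i < n" for i
  proof -
    have "(?B *\<^sub>v v) $ i = e * v $ i" using v that by simp
    moreover have "(?B *\<^sub>v v) $ i = (\<Sum>j<n. complex_of_real (A $$ (i,j)) * v $ j)"
      using that A v by (subst index_mult_mat_vec) (auto simp: scalar_prod_def lessThan_atLeast0 intro!: sum.cong)
    ultimately show ?thesis by simp
  qed
  define N where "N = (\<Sum>i<n. cmod (v $ i) ^ 2)"
  have s1: "s = e * complex_of_real N"
  proof -
    have "s = (\<Sum>i<n. cnj (v $ i) * (\<Sum>j<n. complex_of_real (A $$ (i,j)) * v $ j))"
      unfolding s_def by (simp add: sum_distrib_left mult.assoc)
    also have "\<dots> = (\<Sum>i<n. e * (cnj (v $ i) * v $ i))" by (rule sum.cong) (auto simp: Bv)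
    also have "\<dots> = e * complex_of_real N" unfolding N_def
      by (simp add: sum_distrib_left of_real_sum mult.commute flip: of_real_power complex_norm_square)
    finally show ?thesis .
  qed
  have "cnj s = (\<Sum>i<n. \<Sum>j<n. v $ i * complex_of_real (A $$ (i,j)) * cnj (v $ j))"
    unfolding s_def by simp
  also have "\<dots> = (\<Sum>j<n. \<Sum>i<n. v $ i * complex_of_real (A $$ (i,j)) * cnj (v $ j))"
    by (rule sum.swap)
  also have "\<dots> = s" unfolding s_def
    by (intro sum.cong refl) (simp add: sym mult.commute mult.left_commute)
  finally have "Im s = 0" by (metis Im_complex_of_real complex_cnj_cancel_iff complex_cnj_complex_of_real
        complex_cnj_zero_iff complex_is_Real_iff Reals_cnj_iff)
  have "N \<noteq> 0"
  proof
    assume "N = 0"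
    hence "\<forall>i\<in>{..<n}. cmod (v $ i) ^ 2 = 0" unfolding N_def
      by (subst (asm) sum_nonneg_eq_0_iff) auto
    hence "v = 0\<^sub>v n" using v(1) by (intro eq_vecI) auto
    with v(2) show False by simp
  qed
  with s1 \<open>Im s = 0\<close> show ?thesis by simp
qed



interpretation ofrp: map_poly_comm_ring_hom "of_real :: real \<Rightarrow> complex" ..

lemma map_poly_of_real_prod: "map_poly complex_of_real (\<Prod>a\<leftarrow>bs. [:- a, 1:]) = (\<Prod>a\<leftarrow>map of_real bs. [:- a, 1:])"
proof (induction bs)
  case (Cons a bs)
  have "map_poly complex_of_real [:- a, 1:] = [:- complex_of_real a, 1:]" by simp
  with Cons show ?case by (simp only: list.map prod_list.Cons ofrp.hom_mult)
qed simp

lemma map_poly_of_real_inj: "map_poly complex_of_real p = map_poly complex_of_real q \<Longrightarrow> p = q"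
  by (metis of_real_hom.coeff_map_poly_hom of_real_eq_iff poly_eqI)

lemma real_sym_factor:
  fixes A :: "real mat"
  assumes A: "A \<in> carrier_mat n n" and sym: "\<And>i j. i < n \<Longrightarrow> j < n \<Longrightarrow> A $$ (i,j) = A $$ (j,i)"
  shows "\<exists>xs. length xs = n \<and> sorted_wrt (\<ge>) xs \<and> char_poly A = (\<Prod>a\<leftarrow>xs. [:- a, 1:])"
proof -
  let ?B = "map_mat complex_of_real A"
  have B: "?B \<in> carrier_mat n n" using A by simp
  obtain as where as: "char_poly ?B = (\<Prod>a\<leftarrow>as. [:- a, 1:])" "length as = n"
    using char_poly_factorized[OF B] by blast
  have re: "Im a = 0" if "a \<in> set as" for a
    by (rule real_sym_eig_real[OF A sym]) (use as(1) that linear_poly_root in auto)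
  define bs where "bs = map Re as"
  have "map of_real bs = as" unfolding bs_def using re
    by (induction as) (auto simp: complex_eq_iff)
  hence "map_poly complex_of_real (char_poly A) = map_poly complex_of_real (\<Prod>a\<leftarrow>bs. [:- a, 1:])"
    using as(1) of_real_hom.char_poly_hom[OF A] map_poly_of_real_prod[of bs] by metis
  hence cp: "char_poly A = (\<Prod>a\<leftarrow>bs. [:- a, 1:])" by (rule map_poly_of_real_inj)
  define xs where "xs = rev (sort bs)"
  have "mset xs = mset bs" unfolding xs_def by simp
  hence "(\<Prod>a\<leftarrow>xs. [:- a, 1:]) = (\<Prod>a\<leftarrow>bs. [:- a, 1:])"
    by (simp only: prod_mset_prod_list[symmetric] mset_map)
  moreover have "sorted_wrt (\<ge>) xs" unfolding xs_def by (simp add: sorted_wrt_rev)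
  moreover have "length xs = n" unfolding xs_def bs_def using as by simp
  ultimately show ?thesis using cp by metis
qed

definition tr :: "'a::comm_ring_1 mat \<Rightarrow> 'a" where "tr A = (\<Sum>i<dim_row A. A $$ (i,i))"

lemma tr_comm: assumes "X \<in> carrier_mat n n" "Y \<in> carrier_mat n n"
  shows "tr (X * Y) = tr (Y * X)"
proof -
  have "tr (X * Y) = (\<Sum>i<n. \<Sum>j<n. X $$ (i,j) * Y $$ (j,i))"
    unfolding tr_def using assms
    by (auto simp: scalar_prod_def lessThan_atLeast0 intro!: sum.cong)
  also have "\<dots> = (\<Sum>j<n. \<Sum>i<n. X $$ (i,j) * Y $$ (j,i))" by (rule sum.swap)
  also have "\<dots> = tr (Y * X)"
    unfolding tr_def using assms
    by (auto simp: scalar_prod_def lessThan_atLeast0 mult.commute intro!: sum.cong)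
  finally show ?thesis .
qed

lemma tr_char_poly:
  fixes A :: "complex mat"
  assumes A: "A \<in> carrier_mat n n" and c: "char_poly A = (\<Prod>e\<leftarrow>es. [:- e, 1:])"
  shows "sum_list es = tr A"
proof -
  obtain B P Q where sd: "schur_decomposition A es = (B,P,Q)" by (cases "schur_decomposition A es") auto
  from schur_decomposition[OF A c sd] have
    w: "similar_mat_wit A B P Q" and d: "diag_mat B = es" by auto
  have dimA: "n = dim_row A" using A by simp
  note W = similar_mat_witD[OF dimA w]
  have "tr A = tr (P * (B * Q))"
    by (subst W(3), rule arg_cong[where f=tr], rule assoc_mult_mat[OF W(6) W(5) W(7)])
  also have "\<dots> = tr ((B * Q) * P)" by (rule tr_comm) (use W in auto)
  also have "\<dots> = tr B"
  proof -
    have "(B * Q) * P = B * (Q * P)" by (rule assoc_mult_mat[OF W(5) W(7) W(6)])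
    also have "B * (Q * P) = B" unfolding W(2) by (rule right_mult_one_mat[OF W(5)])
    finally show ?thesis by simp
  qed
  also have "\<dots> = sum_list es" unfolding d[symmetric] tr_def diag_mat_def
    using W(5) by (simp add: interv_sum_list_conv_sum_set_nat lessThan_atLeast0)
  finally show ?thesis by simp
qed

lemma real_tr_char_poly:
  fixes A :: "real mat"
  assumes A: "A \<in> carrier_mat n n" and c: "char_poly A = (\<Prod>e\<leftarrow>es. [:- e, 1:])"
  shows "sum_list es = tr A"
proof -
  have B: "map_mat complex_of_real A \<in> carrier_mat n n" using A by simp
  have "char_poly (map_mat complex_of_real A) = (\<Prod>e\<leftarrow>map of_real es. [:- e, 1:])"
    using of_real_hom.char_poly_hom[OF A] c map_poly_of_real_prod[of es] by metis
  from tr_char_poly[OF B this] have "sum_list (map complex_of_real es) = tr (map_mat complex_of_real A)" .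
  moreover have "tr (map_mat complex_of_real A) = of_real (tr A)" unfolding tr_def using A by simp
  moreover have "sum_list (map complex_of_real es) = of_real (sum_list es)" by (induction es) auto
  ultimately show ?thesis by simp
qed



lemma laplacian_carrier: "laplacian n E \<in> carrier_mat n n"
  unfolding laplacian_def by simp

lemma laplacian_sym: assumes "simple_graph n E" "i < n" "j < n"
  shows "laplacian n E $$ (i,j) = laplacian n E $$ (j,i)"
  using assms unfolding laplacian_def simple_graph_def by auto

lemma lap_eigs_props: assumes "simple_graph n E"
  shows "length (lap_eigs n E) = n \<and> sorted_wrt (\<ge>) (lap_eigs n E) \<and>
      char_poly (laplacian n E) = (\<Prod>a\<leftarrow>lap_eigs n E. [:- a, 1:])"
proof -
  have ex: "\<exists>xs. length xs = n \<and> sorted_wrt (\<ge>) xs \<and> char_poly (laplacian n E) = (\<Prod>a\<leftarrow>xs. [:- a, 1:])"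
    by (rule real_sym_factor[OF laplacian_carrier]) (rule laplacian_sym[OF assms])
  have "\<exists>!xs. length xs = n \<and> sorted_wrt (\<ge>) xs \<and> char_poly (laplacian n E) = (\<Prod>a\<leftarrow>xs. [:- a, 1:])"
  proof (rule ex_ex1I[OF ex])
    fix xs ys assume "length xs = n \<and> sorted_wrt (\<ge>) xs \<and> char_poly (laplacian n E) = (\<Prod>a\<leftarrow>xs. [:- a, 1:])"
      "length ys = n \<and> sorted_wrt (\<ge>) ys \<and> char_poly (laplacian n E) = (\<Prod>a\<leftarrow>ys. [:- a, 1:])"
    thus "xs = ys" using sorted_desc_unique lin_prod_mset by metis
  qed
  from theI'[OF this] show ?thesis unfolding lap_eigs_def .
qed

lemma lap_eigs_eq: assumes "simple_graph n E" "sorted_wrt (\<ge>) xs"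
  "char_poly (laplacian n E) = (\<Prod>a\<leftarrow>xs. [:- a, 1:])"
  shows "lap_eigs n E = xs"
  using lap_eigs_props[OF assms(1)] assms(2,3) sorted_desc_unique lin_prod_mset by metis

lemma handshake: assumes "simple_graph n E"
  shows "(\<Sum>i<n. degree n E i) = 2 * num_edges n E"
proof -
  let ?S = "SIGMA i:{..<n}. {u. u < n \<and> E i u}"
  have "(\<Sum>i<n. degree n E i) = card ?S"
    unfolding degree_def by (subst card_SigmaI) auto
  also have "?S = {(i, j). i < j \<and> j < n \<and> E i j} \<union> (\<lambda>(a,b). (b,a)) ` {(i, j). i < j \<and> j < n \<and> E i j}"
    using assms unfolding simple_graph_def
    by (auto simp: image_iff) (metis linorder_neqE_nat)+
  also have "card \<dots> = card {(i, j). i < j \<and> j < n \<and> E i j} + card ((\<lambda>(a,b). (b,a)) ` {(i, j). i < j \<and> j < n \<and> E i j})"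
    by (rule card_Un_disjoint) (auto intro: finite_subset[of _ "{..<n} \<times> {..<n}"])
  also have "card ((\<lambda>(a,b). (b,a)) ` {(i, j). i < j \<and> j < n \<and> E i j}) = card {(i, j). i < j \<and> j < n \<and> E i j}"
    by (rule card_image) (auto simp: inj_on_def)
  finally show ?thesis unfolding num_edges_def by simp
qed

lemma lap_eigs_sum: assumes "simple_graph n E"
  shows "sum_list (lap_eigs n E) = 2 * real (num_edges n E)"
proof -
  have "sum_list (lap_eigs n E) = tr (laplacian n E)"
    by (rule real_tr_char_poly[OF laplacian_carrier]) (use lap_eigs_props[OF assms] in auto)
  also have "\<dots> = (\<Sum>i<n. real (degree n E i))" unfolding tr_def laplacian_def by simp
  also have "\<dots> = real (\<Sum>i<n. degree n E i)" by simp
  finally show ?thesis using handshake[OF assms] by simp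
qed



definition cc :: "(nat \<Rightarrow> bool) \<Rightarrow> nat \<Rightarrow> nat \<Rightarrow> nat" where
  "cc D N p = card {q. p < q \<and> q < N \<and> D q}"
definition dg :: "(nat \<Rightarrow> bool) \<Rightarrow> nat \<Rightarrow> nat \<Rightarrow> nat" where
  "dg D N p = (if D p then p else 0) + cc D N p"
definition mu :: "(nat \<Rightarrow> bool) \<Rightarrow> nat \<Rightarrow> nat \<Rightarrow> nat" where
  "mu D N j = (if j = 0 then 0 else (if D j then j + 1 else 0) + cc D N j)"
definition cs :: "(nat \<Rightarrow> bool) \<Rightarrow> nat \<Rightarrow> nat \<Rightarrow> nat" where
  "cs D N i = card {p. p < N \<and> i \<le> dg D N p}"

lemma cc_Suc: "cc D (Suc N) p = cc D N p + (if D N \<and> p < N then 1 else 0)"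
proof -
  have "{q. p < q \<and> q < Suc N \<and> D q} = {q. p < q \<and> q < N \<and> D q} \<union> (if D N \<and> p < N then {N} else {})"
    by (auto simp: less_Suc_eq)
  thus ?thesis unfolding cc_def by (auto simp: card_insert_if)
qed

lemma cc_le: "cc D N p \<le> N - Suc p"
proof -
  have "cc D N p \<le> card {Suc p..<N}" unfolding cc_def by (rule card_mono) auto
  thus ?thesis by simp
qed

lemma dg_lt: "p < N \<Longrightarrow> dg D N p < N"
  using cc_le[of D N p] unfolding dg_def by auto

lemma cs_ge: "N \<le> i \<Longrightarrow> cs D N i = 0"
  unfolding cs_def using dg_lt[of _ N D] by (auto simp: card_eq_0_iff) (meson le_trans not_less)

lemma cs_0: "cs D N 0 = N" unfolding cs_def by simp

lemma conj_main: "mset (map (mu D N) [0..<N]) = mset (map (cs D N) [1..<Suc N])"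
proof (induction N)
  case 0 then show ?case by simp
next
  case (Suc N)
  show ?case
  proof (cases "D N")
    case False
    have cc': "cc D (Suc N) p = cc D N p" for p using False by (simp add: cc_Suc)
    have mu': "mu D (Suc N) j = mu D N j" for j unfolding mu_def cc' by simp
    have muN: "mu D (Suc N) N = 0" unfolding mu_def using False cc_le[of D "Suc N" N] by simp
    have cs': "cs D (Suc N) i = cs D N i" if "1 \<le> i" for i
    proof -
      have dgN: "dg D (Suc N) N = 0" unfolding dg_def using False cc_le[of D "Suc N" N] by simp
      have "{p. p < Suc N \<and> i \<le> dg D (Suc N) p} = {p. p < N \<and> i \<le> dg D N p}"
        using that dgN by (auto simp: less_Suc_eq dg_def cc')
      thus ?thesis unfolding cs_def by simp
    qed
    have E1: "map (mu D (Suc N)) [0..<Suc N] = map (mu D N) [0..<N] @ [0]"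
      using muN mu' by simp
    have E2: "map (cs D (Suc N)) [1..<Suc (Suc N)] = map (cs D N) [1..<Suc N] @ [0]"
    proof -
      have "map (cs D (Suc N)) [1..<Suc N] = map (cs D N) [1..<Suc N]"
        by (rule map_cong) (auto intro!: cs')
      moreover have "cs D (Suc N) (Suc N) = 0" using cs'[of "Suc N"] cs_ge[of N "Suc N" D] by simp
      ultimately show ?thesis by simp
    qed
    show ?thesis unfolding E1 E2 by (simp only: mset_append Suc.IH)
  next
    case True
    show ?thesis
    proof (cases "N = 0")
      case True
      then show ?thesis using cs_ge[of 1 1 D] by (simp add: mu_def)
    next
      case N0: False
      have cc': "p < N \<Longrightarrow> cc D (Suc N) p = cc D N p + 1" for p using True by (simp add: cc_Suc)
      have ccN: "cc D (Suc N) N = 0" using cc_le[of D "Suc N" N] by simp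
      have mu': "j < N \<Longrightarrow> 0 < j \<Longrightarrow> mu D (Suc N) j = mu D N j + 1" for j
        unfolding mu_def using cc' by simp
      have muN: "mu D (Suc N) N = N + 1" unfolding mu_def using N0 True ccN by simp
      have dg': "p < N \<Longrightarrow> dg D (Suc N) p = dg D N p + 1" for p unfolding dg_def using cc' by simp
      have dgN: "dg D (Suc N) N = N" unfolding dg_def using True ccN by simp
      have cs': "cs D (Suc N) (Suc i) = cs D N i + (if Suc i \<le> N then 1 else 0)" for i
      proof -
        have "{p. p < Suc N \<and> Suc i \<le> dg D (Suc N) p} = {p. p < N \<and> i \<le> dg D N p} \<union> (if Suc i \<le> N then {N} else {})"
          using dg' dgN by (auto simp: less_Suc_eq)
        thus ?thesis unfolding cs_def by (auto simp: card_insert_if)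
      qed
      have L0: "[0..<N] = 0 # [1..<N]" using N0 by (simp add: upt_rec)
      have L: "map (mu D (Suc N)) [0..<Suc N] = 0 # map (\<lambda>j. mu D N j + 1) [1..<N] @ [N + 1]"
        using muN mu' L0 by (simp add: mu_def)
      have "map (cs D (Suc N)) [1..<Suc (Suc N)] = map (\<lambda>i. cs D (Suc N) (Suc i)) [0..<Suc N]"
      proof -
        have U: "[1..<Suc (Suc N)] = map Suc [0..<Suc N]" by (simp add: map_Suc_upt)
        show ?thesis by (simp only: U map_map comp_def)
      qed
      also have "\<dots> = (N + 1) # map (\<lambda>i. cs D N i + 1) [1..<N] @ [0]"
      proof -
        have "[0..<Suc N] = 0 # [1..<N] @ [N]" using L0 by simp
        moreover have "map (\<lambda>i. cs D (Suc N) (Suc i)) [1..<N] = map (\<lambda>i. cs D N i + 1) [1..<N]"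
          using cs' by simp
        ultimately show ?thesis using cs' cs_0[of D N] cs_ge[of N N D] N0 by simp
      qed
      finally have R: "map (cs D (Suc N)) [1..<Suc (Suc N)] = (N + 1) # map (\<lambda>i. cs D N i + 1) [1..<N] @ [0]" .
      have "mset (map (mu D N) [0..<N]) = add_mset 0 (mset (map (mu D N) [1..<N]))"
        using L0 by (simp add: mu_def)
      moreover have "mset (map (cs D N) [1..<Suc N]) = add_mset 0 (mset (map (cs D N) [1..<N]))"
        using N0 cs_ge[of N N D] by simp
      ultimately have "mset (map (mu D N) [1..<N]) = mset (map (cs D N) [1..<N])" using Suc.IH by simp
      hence "image_mset Suc (mset (map (mu D N) [1..<N])) = image_mset Suc (mset (map (cs D N) [1..<N]))" by simp
      hence "mset (map (\<lambda>j. mu D N j + 1) [1..<N]) = mset (map (\<lambda>i. cs D N i + 1) [1..<N])"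
        by (simp add: image_mset.compositionality comp_def)
      thus ?thesis unfolding L R by simp
    qed
  qed
qed



definition vv :: "nat \<Rightarrow> nat \<Rightarrow> real" where
  "vv j q = (if j = 0 then 1 else if q < j then 1 else if q = j then - real j else 0)"

definition nv :: "nat \<Rightarrow> nat \<Rightarrow> real" where
  "nv n j = (if j = 0 then real n else real j + real j ^ 2)"

lemma sum_if_lt: "j \<le> (n::nat) \<Longrightarrow> (\<Sum>q<n. if q < j then c else 0) = real j * (c::real)"
proof -
  assume "j \<le> n"
  hence "{q \<in> {..<n}. q < j} = {..<j}" by auto
  hence "(\<Sum>q<n. if q < j then c else 0) = (\<Sum>q\<in>{..<j}. c)"
    using sum.inter_filter[of "{..<n}" "\<lambda>_. c" "\<lambda>q. q < j"] by simp
  thus ?thesis by simp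
qed

lemma sum_if_eq: "j < (n::nat) \<Longrightarrow> (\<Sum>q<n. if q = j then c else 0) = (c::real)"
  by (induction n) (auto simp: less_Suc_eq)

lemma sum_cc: "(\<Sum>q<n. if j < q \<and> D q then 1 else 0) = real (cc D n j)"
proof -
  have "(\<Sum>q<n. if j < q \<and> D q then 1 else (0::real)) = (\<Sum>q\<in>{q \<in> {..<n}. j < q \<and> D q}. 1)"
    using sum.inter_filter[of "{..<n}" "\<lambda>_. 1::real" "\<lambda>q. j < q \<and> D q"] by simp
  also have "{q \<in> {..<n}. j < q \<and> D q} = {q. j < q \<and> q < n \<and> D q}" by auto
  finally show ?thesis unfolding cc_def by simp
qed

lemma sum_vv: "j < n \<Longrightarrow> (\<Sum>q<n. vv j q) = (if j = 0 then real n else 0)"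
proof (cases "j = 0")
  case False
  assume jn: "j < n"
  have "(\<Sum>q<n. vv j q) = (\<Sum>q<n. (if q < j then 1 else 0) + (if q = j then - real j else 0))"
    by (rule sum.cong) (auto simp: vv_def False)
  also have "\<dots> = 0" using jn by (simp add: sum.distrib sum_if_lt sum_if_eq)
  finally show ?thesis using False by simp
qed (simp add: vv_def)

lemma vv_orth: assumes "i < n" "j < n"
  shows "(\<Sum>q<n. vv i q * vv j q) = (if i = j then nv n j else 0)"
proof -
  have lt: "(\<Sum>q<n. vv i q * vv j q) = 0" if "i < j" "j < n" for i j
  proof (cases "i = 0")
    case True thus ?thesis using sum_vv[OF that(2)] that by (simp add: vv_def)
  next
    case False
    have "(\<Sum>q<n. vv i q * vv j q) = (\<Sum>q<n. vv i q)"
      by (rule sum.cong) (use that False in \<open>auto simp: vv_def\<close>)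
    thus ?thesis using sum_vv[of i n] that False by simp
  qed
  show ?thesis
  proof (cases i j rule: linorder_cases)
    case less then show ?thesis using lt assms by simp
  next
    case greater then show ?thesis using lt[of j i] assms by (simp add: mult.commute)
  next
    case equal
    show ?thesis
    proof (cases "j = 0")
      case True thus ?thesis using equal by (simp add: vv_def nv_def)
    next
      case False
      have "(\<Sum>q<n. vv j q * vv j q) = (\<Sum>q<n. (if q < j then 1 else 0) + (if q = j then real j ^ 2 else 0))"
        by (rule sum.cong) (auto simp: vv_def False power2_eq_square)
      also have "\<dots> = nv n j" using assms False by (simp add: sum.distrib sum_if_lt sum_if_eq nv_def)
      finally show ?thesis using equal by simp
    qed
  qed
qed

lemma eig_comb: assumes "j < n" "p < n"
  shows "(\<Sum>q<n. if q \<noteq> p \<and> D (max p q) then vv j p - vv j q else 0) = real (mu D n j) * vv j p"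
proof (cases "j = 0")
  case True thus ?thesis by (simp add: vv_def mu_def)
next
  case j0: False
  show ?thesis
  proof (cases p j rule: linorder_cases)
    case less
    have "(\<Sum>q<n. if q \<noteq> p \<and> D (max p q) then vv j p - vv j q else 0)
        = (\<Sum>q<n. (if q = j then (if D j then 1 + real j else 0) else 0) + (if j < q \<and> D q then 1 else 0))"
      by (rule sum.cong) (use less j0 in \<open>auto simp: vv_def max_def\<close>)
    also have "\<dots> = (if D j then 1 + real j else 0) + real (cc D n j)"
      using assms by (simp add: sum.distrib sum_if_eq sum_cc)
    finally show ?thesis using less j0 by (simp add: vv_def mu_def)
  next
    case equal
    have "(\<Sum>q<n. if q \<noteq> p \<and> D (max p q) then vv j p - vv j q else 0)
        = (\<Sum>q<n. (if q < j then (if D j then - real j - 1 else 0) else 0) + (- real j) * (if j < q \<and> D q then 1 else 0))"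
      by (rule sum.cong) (use equal j0 in \<open>auto simp: vv_def max_def\<close>)
    also have "\<dots> = (\<Sum>q<n. (if q < j then (if D j then - real j - 1 else 0) else 0)) + (- real j) * (\<Sum>q<n. (if j < q \<and> D q then 1 else 0))"
      by (simp only: sum.distrib sum_distrib_left)
    also have "\<dots> = real j * (if D j then - real j - 1 else 0) + (- real j) * real (cc D n j)"
      using assms equal by (simp only: sum_if_lt sum_cc)
    finally have X: "(\<Sum>q<n. if q \<noteq> p \<and> D (max p q) then vv j p - vv j q else 0) = real j * (if D j then - real j - 1 else 0) + (- real j) * real (cc D n j)" .
    have Y: "real (mu D n j) * vv j p = real j * (if D j then - real j - 1 else 0) + (- real j) * real (cc D n j)"
      using equal j0 by (simp add: vv_def mu_def algebra_simps)
    show ?thesis by (rule X[THEN trans], rule Y[symmetric])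
  next
    case greater
    have "(\<Sum>q<n. if q \<noteq> p \<and> D (max p q) then vv j p - vv j q else 0)
        = (\<Sum>q<n. (if D p then - 1 else 0) * vv j q)"
      by (rule sum.cong) (use greater j0 in \<open>auto simp: vv_def max_def\<close>)
    also have "\<dots> = 0" using sum_vv[OF assms(1)] j0 by (simp flip: sum_distrib_left)
    finally show ?thesis using greater j0 by (simp add: vv_def)
  qed
qed



lemma mat_mult_entry: assumes "A \<in> carrier_mat n n" "B \<in> carrier_mat n n" "i < n" "j < n"
  shows "(A * B) $$ (i,j) = (\<Sum>k<n. A $$ (i,k) * B $$ (k,j))"
  using assms by (simp add: scalar_prod_def lessThan_atLeast0)

context
  fixes n :: nat and T :: "nat \<Rightarrow> nat \<Rightarrow> bool" and \<sigma> :: "nat \<Rightarrow> nat" and D :: "nat \<Rightarrow> bool"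
  assumes sg: "simple_graph n T" and bij: "bij_betw \<sigma> {0..<n} {0..<n}"
    and adj: "\<forall>i<n. \<forall>j<n. i \<noteq> j \<longrightarrow> (T (\<sigma> i) (\<sigma> j) \<longleftrightarrow> D (max i j))"
begin

definition tau where "tau = inv_into {0..<n} \<sigma>"

lemma sig_lt: "p < n \<Longrightarrow> \<sigma> p < n" using bij by (auto dest: bij_betwE)
lemma tau_lt: "x < n \<Longrightarrow> tau x < n"
  unfolding tau_def using bij by (metis atLeastLessThan_iff bij_betw_def inv_into_into zero_le)
lemma sig_tau: "x < n \<Longrightarrow> \<sigma> (tau x) = x"
  unfolding tau_def using bij by (metis atLeastLessThan_iff bij_betw_def f_inv_into_f zero_le)
lemma tau_sig: "p < n \<Longrightarrow> tau (\<sigma> p) = p"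
  unfolding tau_def using bij by (metis atLeastLessThan_iff bij_betw_def inv_into_f_f zero_le)

lemma reindex: "(\<Sum>x<n. g x) = (\<Sum>q<n. g (\<sigma> q))"
  using sum.reindex_bij_betw[OF bij, of g] by (simp add: lessThan_atLeast0)

lemma card_reindex: "card {x. x < n \<and> P x} = card {q. q < n \<and> P (\<sigma> q)}"
proof -
  have "{x. x < n \<and> P x} = \<sigma> ` {q. q < n \<and> P (\<sigma> q)}"
  proof (intro equalityI subsetI)
    fix x assume "x \<in> {x. x < n \<and> P x}"
    hence "x < n" "P x" by auto
    thus "x \<in> \<sigma> ` {q. q < n \<and> P (\<sigma> q)}"
      using sig_tau[of x] tau_lt[of x] by (intro image_eqI[of _ _ "tau x"]) auto
  qed (auto simp: sig_lt)
  moreover have "inj_on \<sigma> {q. q < n \<and> P (\<sigma> q)}"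
    using bij unfolding bij_betw_def by (auto intro: inj_on_subset)
  ultimately show ?thesis by (simp add: card_image)
qed

lemma adj': "p < n \<Longrightarrow> q < n \<Longrightarrow> T (\<sigma> p) (\<sigma> q) \<longleftrightarrow> q \<noteq> p \<and> D (max p q)"
  using adj sg unfolding simple_graph_def by auto

lemma degree_sig: "p < n \<Longrightarrow> degree n T (\<sigma> p) = card {q. q < n \<and> q \<noteq> p \<and> D (max p q)}"
  unfolding degree_def by (subst card_reindex) (auto simp: adj' intro!: arg_cong[where f=card])

lemma degree_dg: assumes "p < n" shows "degree n T (\<sigma> p) = dg D n p"
proof -
  have "{q. q < n \<and> q \<noteq> p \<and> D (max p q)} = (if D p then {..<p} else {}) \<union> {q. p < q \<and> q < n \<and> D q}"
    using assms by (auto simp: max_def)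
  moreover have "card ((if D p then {..<p} else {}) \<union> {q. p < q \<and> q < n \<and> D q}) = (if D p then p else 0) + cc D n p"
    unfolding cc_def by (subst card_Un_disjoint) auto
  ultimately show ?thesis using degree_sig[OF assms] unfolding dg_def by simp
qed

lemma degree_sum: assumes "p < n"
  shows "real (degree n T (\<sigma> p)) = (\<Sum>q<n. if q \<noteq> p \<and> D (max p q) then 1 else 0)"
proof -
  have "(\<Sum>q<n. if q \<noteq> p \<and> D (max p q) then 1 else (0::real)) = (\<Sum>q\<in>{q \<in> {..<n}. q \<noteq> p \<and> D (max p q)}. 1)"
    using sum.inter_filter[of "{..<n}" "\<lambda>_. 1::real" "\<lambda>q. q \<noteq> p \<and> D (max p q)"] by simp
  also have "{q \<in> {..<n}. q \<noteq> p \<and> D (max p q)} = {q. q < n \<and> q \<noteq> p \<and> D (max p q)}" by auto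
  finally show ?thesis using degree_sig[OF assms] by simp
qed

lemma lap_entry: "p < n \<Longrightarrow> q < n \<Longrightarrow> laplacian n T $$ (\<sigma> p, \<sigma> q) =
   (if q = p then real (degree n T (\<sigma> p)) else if D (max p q) then -1 else 0)"
proof -
  assume p: "p < n" and q: "q < n"
  have inj: "\<sigma> p = \<sigma> q \<longleftrightarrow> p = q"
    using bij p q unfolding bij_betw_def by (metis atLeastLessThan_iff inj_on_eq_iff zero_le)
  have "laplacian n T $$ (\<sigma> p, \<sigma> q) = (if \<sigma> p = \<sigma> q then real (degree n T (\<sigma> p)) else if T (\<sigma> p) (\<sigma> q) then -1 else 0)"
    unfolding laplacian_def using sig_lt[OF p] sig_lt[OF q] by simp
  thus ?thesis unfolding inj adj'[OF p q] by auto
qed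

lemma Lv: assumes "p < n"
  shows "(\<Sum>q<n. laplacian n T $$ (\<sigma> p, \<sigma> q) * w q) = (\<Sum>q<n. if q \<noteq> p \<and> D (max p q) then w p - w q else 0)"
proof -
  have "(\<Sum>q<n. laplacian n T $$ (\<sigma> p, \<sigma> q) * w q) =
     (\<Sum>q<n. (if q = p then real (degree n T (\<sigma> p)) * w p else 0) - (if q \<noteq> p \<and> D (max p q) then w q else 0))"
    by (rule sum.cong) (auto simp: lap_entry assms)
  also have "\<dots> = real (degree n T (\<sigma> p)) * w p - (\<Sum>q<n. if q \<noteq> p \<and> D (max p q) then w q else 0)"
    using assms by (simp add: sum_subtractf sum_if_eq)
  also have "real (degree n T (\<sigma> p)) * w p = (\<Sum>q<n. if q \<noteq> p \<and> D (max p q) then w p else 0)"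
    unfolding degree_sum[OF assms] sum_distrib_right by (rule sum.cong) auto
  also have "(\<Sum>q<n. if q \<noteq> p \<and> D (max p q) then w p else 0) - (\<Sum>q<n. if q \<noteq> p \<and> D (max p q) then w q else 0)
     = (\<Sum>q<n. if q \<noteq> p \<and> D (max p q) then w p - w q else 0)"
    by (simp add: sum_subtractf[symmetric] if_distrib) (rule sum.cong, auto)
  finally show ?thesis .
qed

definition VV where "VV = mat n n (\<lambda>(x,j). vv j (tau x))"
definition DD where "DD = mat n n (\<lambda>(i,j). if i = j then real (mu D n i) else 0)"
definition WW where "WW = mat n n (\<lambda>(j,x). vv j (tau x) / nv n j)"

lemma carriers: "VV \<in> carrier_mat n n" "DD \<in> carrier_mat n n" "WW \<in> carrier_mat n n"
  unfolding VV_def DD_def WW_def by auto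

lemma LV: "laplacian n T * VV = VV * DD"
proof (rule eq_matI)
  fix x j assume x: "x < dim_row (VV * DD)" and j: "j < dim_col (VV * DD)"
  hence x: "x < n" and j: "j < n" using carriers by auto
  define p where "p = tau x"
  have p: "p < n" "\<sigma> p = x" using tau_lt sig_tau x unfolding p_def by auto
  have "(laplacian n T * VV) $$ (x,j) = (\<Sum>y<n. laplacian n T $$ (x,y) * vv j (tau y))"
    using x j by (subst mat_mult_entry[OF laplacian_carrier carriers(1)]) (auto simp: VV_def intro!: sum.cong)
  also have "\<dots> = (\<Sum>q<n. laplacian n T $$ (\<sigma> p, \<sigma> q) * vv j q)"
    by (subst reindex) (simp add: p tau_sig)
  also have "\<dots> = real (mu D n j) * vv j p" unfolding Lv[OF p(1)] by (rule eig_comb[OF j p(1)])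
  also have "\<dots> = (VV * DD) $$ (x,j)"
  proof -
    have "(VV * DD) $$ (x,j) = (\<Sum>k<n. vv k (tau x) * (if k = j then real (mu D n k) else 0))"
      using x j by (subst mat_mult_entry[OF carriers(1,2)]) (auto simp: VV_def DD_def intro!: sum.cong)
    also have "\<dots> = (\<Sum>k<n. if k = j then vv j (tau x) * real (mu D n j) else 0)"
      by (rule sum.cong) auto
    also have "\<dots> = vv j (tau x) * real (mu D n j)" using j by (rule sum_if_eq)
    finally show ?thesis unfolding p_def by simp
  qed
  finally show "(laplacian n T * VV) $$ (x,j) = (VV * DD) $$ (x,j)" .
qed (use carriers laplacian_carrier in auto)

lemma nv_pos: "j < n \<Longrightarrow> nv n j \<noteq> 0"
  unfolding nv_def using add_pos_nonneg[of "real j" "real j ^ 2"] by auto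

lemma WV: "WW * VV = 1\<^sub>m n"
proof (rule eq_matI)
  fix i j assume i: "i < dim_row (1\<^sub>m n :: real mat)" and j: "j < dim_col (1\<^sub>m n :: real mat)"
  hence i: "i < n" and j: "j < n" by auto
  have "(WW * VV) $$ (i,j) = (\<Sum>x<n. vv i (tau x) / nv n i * vv j (tau x))"
    using i j by (subst mat_mult_entry[OF carriers(3,1)]) (auto simp: VV_def WW_def intro!: sum.cong)
  also have "\<dots> = (\<Sum>q<n. vv i q * vv j q) / nv n i"
    by (subst reindex) (simp add: tau_sig sum_divide_distrib)
  also have "\<dots> = (if i = j then 1 else 0)" using vv_orth[OF i j] nv_pos[OF j] by simp
  finally show "(WW * VV) $$ (i,j) = 1\<^sub>m n $$ (i,j)" using i j by simp
qed (use carriers in auto)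

lemma char_poly_T: "char_poly (laplacian n T) = (\<Prod>a\<leftarrow>map (\<lambda>i. real (mu D n i)) [0..<n]. [:- a, 1:])"
proof -
  have VW: "VV * WW = 1\<^sub>m n" by (rule mat_mult_left_right_inverse[OF carriers(3,1) WV])
  have "laplacian n T = laplacian n T * (VV * WW)"
    unfolding VW by (simp add: right_mult_one_mat[OF laplacian_carrier])
  also have "\<dots> = (laplacian n T * VV) * WW"
    by (rule assoc_mult_mat[symmetric, OF laplacian_carrier carriers(1,3)])
  finally have "laplacian n T = VV * DD * WW" unfolding LV .
  hence "similar_mat_wit (laplacian n T) DD VV WW"
    by (intro similar_mat_witI[OF VW WV]) (use carriers laplacian_carrier in auto)
  hence "similar_mat (laplacian n T) DD" unfolding similar_mat_def by blast
  hence "char_poly (laplacian n T) = char_poly DD" by (rule char_poly_similar)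
  also have "\<dots> = (\<Prod>a\<leftarrow>diag_mat DD. [:- a, 1:])"
    by (rule char_poly_upper_triangular[OF carriers(2)]) (auto simp: upper_triangular_def DD_def)
  also have "diag_mat DD = map (\<lambda>i. real (mu D n i)) [0..<n]"
    unfolding diag_mat_def DD_def by auto
  finally show ?thesis .
qed

end



lemma sum_split_at: "k \<le> n \<Longrightarrow> sum f {..<n} = sum f {..<k} + sum f {k..<(n::nat)}"
  by (simp add: lessThan_atLeast0 sum.atLeastLessThan_concat)

lemma sum_list_map_nth: "sum_list (map f xs) = (\<Sum>i<length xs. f (xs ! i))"
  by (simp add: sum_list_sum_nth lessThan_atLeast0)

lemma energy_lower:
  fixes g :: "nat \<Rightarrow> real"
  assumes "(\<Sum>i<n. g i) = real n * c" "k \<le> n"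
  shows "(\<Sum>i<n. \<bar>g i - c\<bar>) \<ge> 2 * (\<Sum>i<k. g i - c)"
proof -
  have tot: "(\<Sum>i<n. g i - c) = 0" using assms(1) by (simp add: sum_subtractf)
  have "(\<Sum>i<n. \<bar>g i - c\<bar>) = (\<Sum>i<k. \<bar>g i - c\<bar>) + (\<Sum>i\<in>{k..<n}. \<bar>g i - c\<bar>)"
    by (rule sum_split_at[OF assms(2)])
  also have "\<dots> \<ge> (\<Sum>i<k. g i - c) + (\<Sum>i\<in>{k..<n}. - (g i - c))"
    by (intro add_mono sum_mono) auto
  also have "(\<Sum>i<k. g i - c) + (\<Sum>i\<in>{k..<n}. - (g i - c)) = 2 * (\<Sum>i<k. g i - c) - (\<Sum>i<n. g i - c)"
    using sum_split_at[OF assms(2), of "\<lambda>i. g i - c"] by (simp only: sum_negf)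
  finally show ?thesis using tot by simp
qed

lemma energy_exact:
  fixes g :: "nat \<Rightarrow> real"
  assumes "(\<Sum>i<n. g i) = real n * c" "k \<le> n" "\<And>i. i < k \<Longrightarrow> g i > c"
    "\<And>i. k \<le> i \<Longrightarrow> i < n \<Longrightarrow> g i \<le> c"
  shows "(\<Sum>i<n. \<bar>g i - c\<bar>) = 2 * (\<Sum>i<k. g i - c)"
proof -
  have tot: "(\<Sum>i<n. g i - c) = 0" using assms(1) by (simp add: sum_subtractf)
  have "(\<Sum>i<n. \<bar>g i - c\<bar>) = (\<Sum>i<k. \<bar>g i - c\<bar>) + (\<Sum>i\<in>{k..<n}. \<bar>g i - c\<bar>)"
    by (rule sum_split_at[OF assms(2)])
  also have "\<dots> = (\<Sum>i<k. g i - c) + (\<Sum>i\<in>{k..<n}. - (g i - c))"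
  proof -
    have a: "i \<in> {..<k} \<Longrightarrow> \<bar>g i - c\<bar> = g i - c" for i using assms(3)[of i] by simp
    have b: "i \<in> {k..<n} \<Longrightarrow> \<bar>g i - c\<bar> = - (g i - c)" for i using assms(4)[of i] by simp
    show ?thesis using sum.cong[OF refl a, of "{..<k}"] sum.cong[OF refl b, of "{k..<n}"] by simp
  qed
  also have "\<dots> = 2 * (\<Sum>i<k. g i - c) - (\<Sum>i<n. g i - c)"
    using sum_split_at[OF assms(2), of "\<lambda>i. g i - c"] by (simp only: sum_negf)
  finally show ?thesis using tot by simp
qed

lemma threshold_eigs:
  assumes "threshold_graph n T"
  shows "lap_eigs n T = map (\<lambda>i. real (conj_degree n T i)) [1..<Suc n]"
proof -
  from assms obtain \<sigma> D where sg: "simple_graph n T" and bij: "bij_betw \<sigma> {0..<n} {0..<n}"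
    and adj: "\<forall>i<n. \<forall>j<n. i \<noteq> j \<longrightarrow> (T (\<sigma> i) (\<sigma> j) \<longleftrightarrow> D (max i j))"
    unfolding threshold_graph_def by blast
  have cd: "conj_degree n T i = cs D n i" for i
  proof -
    have "conj_degree n T i = card {q. q < n \<and> i \<le> degree n T (\<sigma> q)}"
      unfolding conj_degree_def by (rule card_reindex[OF sg bij adj])
    also have "\<dots> = cs D n i" unfolding cs_def
      using degree_dg[OF sg bij adj] by (metis (lifting))
    finally show ?thesis .
  qed
  have "lap_eigs n T = map (\<lambda>i. real (cs D n i)) [1..<Suc n]"
  proof (rule lap_eigs_eq[OF sg])
    have "sorted_wrt (\<lambda>i j. real (cs D n j) \<le> real (cs D n i)) [1..<Suc n]"
    proof (rule sorted_wrt_mono_rel[OF _ sorted_wrt_upt])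
      fix i j :: nat assume "i < j"
      hence "cs D n j \<le> cs D n i" unfolding cs_def by (intro card_mono) auto
      thus "real (cs D n j) \<le> real (cs D n i)" by simp
    qed
    thus "sorted_wrt (\<ge>) (map (\<lambda>i. real (cs D n i)) [1..<Suc n])" by (simp add: sorted_wrt_map)
    have "mset (map (\<lambda>i. real (mu D n i)) [0..<n]) = mset (map (\<lambda>i. real (cs D n i)) [1..<Suc n])"
      using arg_cong[OF conj_main[of D n], of "image_mset real"] by (simp add: image_mset.compositionality comp_def)
    hence "(\<Prod>a\<leftarrow>map (\<lambda>i. real (mu D n i)) [0..<n]. [:- a, 1:]) = (\<Prod>a\<leftarrow>map (\<lambda>i. real (cs D n i)) [1..<Suc n]. [:- a, 1:])"
      by (simp only: prod_mset_prod_list[symmetric] mset_map)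
    thus "char_poly (laplacian n T) = (\<Prod>a\<leftarrow>map (\<lambda>i. real (cs D n i)) [1..<Suc n]. [:- a, 1:])"
      using char_poly_T[OF sg bij adj] by simp
  qed
  thus ?thesis by (simp add: cd)
qed

theorem lemma1:
  fixes n m k :: nat and G T :: "nat \<Rightarrow> nat \<Rightarrow> bool"
  assumes "simple_graph n G" and "num_edges n G = m"
    and "1 \<le> k" and "k \<le> n"
    and "lap_eigs n G ! (k - 1) > 2 * real m / real n"
    and "k < n \<Longrightarrow> 2 * real m / real n \<ge> lap_eigs n G ! k"
    and "threshold_graph n T" and "num_edges n T = m"
    and "(\<Sum>i=1..k. real (conj_degree n T i)) \<ge> (\<Sum>i=1..k. lap_eigs n G ! (i - 1))"
  shows "lap_energy n T \<ge> lap_energy n G"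
proof -
  define c where "c = 2 * real m / real n"
  have n0: "n > 0" using assms(3,4) by simp
  have sgT: "simple_graph n T" using assms(7) unfolding threshold_graph_def by blast
  define g where "g i = lap_eigs n G ! i" for i
  define h where "h i = real (conj_degree n T (Suc i))" for i
  note PG = lap_eigs_props[OF assms(1)]
  have lenG: "length (lap_eigs n G) = n" using PG by simp
  have sumG: "(\<Sum>i<n. g i) = real n * c"
    using lap_eigs_sum[OF assms(1)] n0 unfolding g_def c_def assms(2)
    by (simp add: sum_list_sum_nth lessThan_atLeast0 lenG)
  have TL: "lap_eigs n T = map (\<lambda>i. real (conj_degree n T i)) [1..<Suc n]"
    by (rule threshold_eigs[OF assms(7)])
  have nthT: "i < n \<Longrightarrow> lap_eigs n T ! i = h i" for i unfolding TL h_def by (simp add: nth_map del: upt_Suc)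
  have lenT: "length (lap_eigs n T) = n" unfolding TL by simp
  have sumT: "(\<Sum>i<n. h i) = real n * c"
  proof -
    have "(\<Sum>i<n. h i) = sum_list (lap_eigs n T)"
      by (simp add: sum_list_sum_nth lessThan_atLeast0 lenT nthT)
    thus ?thesis using lap_eigs_sum[OF sgT] n0 unfolding c_def assms(8) by simp
  qed
  have LEG: "lap_energy n G = (\<Sum>i<n. \<bar>g i - c\<bar>)"
    unfolding lap_energy_def sum_list_map_nth lenG g_def c_def assms(2) ..
  have LET: "lap_energy n T = (\<Sum>i<n. \<bar>h i - c\<bar>)"
    unfolding lap_energy_def sum_list_map_nth lenT c_def assms(8) by (rule sum.cong) (auto simp: nthT)
  have sortG: "sorted_wrt (\<ge>) (lap_eigs n G)" using PG by simp
  have big: "g i > c" if "i < k" for i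
  proof -
    have "g i \<ge> g (k - 1)"
    proof (cases "i = k - 1")
      case False
      hence "i < k - 1" using that by simp
      thus ?thesis using sorted_wrt_nth_less[OF sortG, of i "k - 1"] assms(3,4) lenG unfolding g_def by simp
    qed simp
    thus ?thesis using assms(5) unfolding g_def c_def by simp
  qed
  have small: "g i \<le> c" if "k \<le> i" "i < n" for i
  proof -
    have "g i \<le> g k"
    proof (cases "i = k")
      case False
      hence "k < i" using that by simp
      thus ?thesis using sorted_wrt_nth_less[OF sortG, of k i] that lenG unfolding g_def by simp
    qed simp
    thus ?thesis using assms(6) that unfolding g_def c_def by simp
  qed
  have "lap_energy n G = 2 * (\<Sum>i<k. g i - c)"
    unfolding LEG by (rule energy_exact[OF sumG assms(4) big small])
  also have "(\<Sum>i<k. g i - c) \<le> (\<Sum>i<k. h i - c)"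
  proof -
    have "(\<Sum>i<k. g i) \<le> (\<Sum>i<k. h i)"
      using assms(9) unfolding g_def h_def by (simp add: sum.atLeast1_atMost_eq)
    thus ?thesis by (simp add: sum_subtractf)
  qed
  also have "2 * (\<Sum>i<k. h i - c) \<le> lap_energy n T"
    unfolding LET by (rule energy_lower[OF sumT assms(4)])
  finally show ?thesis by simp
qed


end
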